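(* The space $(\mathbb{R}^{\mathbb{Z}_<},\tau_\iota)$ is not connected, and it is a Hausdorff space.
   Context: $\mathbb{R}^{\mathbb{Z}_<}$ is the set of formal series $\sum_{i\ge -k}a_i\epsilon^i$ ($k\in\mathbb{N}\cup\{0\}$, $a_i\in\mathbb{R}$), written $\langle a_{-k},\dots,\widehat{a_0},a_1,\dots\rangle$, with coefficientwise addition, Cauchy-product multiplication and lexicographic order; $|\cdot|$ is the associated absolute value, $d(\mathbf{x},\mathbf{y})=|\mathbf{y}-\mathbf{x}|$, $B_{\mathbf{x}}(\mathbf{y})=\{\mathbf{z}:d(\mathbf{x},\mathbf{z})<\mathbf{y}\}$. For $m\in\mathbb{N}\cup\{0\}$ let $\Delta^m=\{a\epsilon^m: a\in\mathbb{R}\}$ (with $a\neq 0$ when $m\ge1$) and $\Delta^{\downarrow m}=\bigcup_{n\ge m}\Delta^n$. A set $O$ is $\iota$-open iff for every $\mathbf{x}\in O$ there is a positive $\iota\in\Delta^{\downarrow m}$ (for some $m$) with $B_{\mathbf{x}}(\iota)\subseteq O$; $\tau_\iota$ is the topology generated by unions of such $\iota$-balls. *)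

theory Defs
  imports "HOL-Analysis.Analysis" "HOL-Computational_Algebra.Formal_Laurent_Series"
begin

text \<open>The field R^{Z_<} is modelled by real formal Laurent series (finitely many
  negative-index coefficients), type real fls; the formal variable fls_X plays the role of epsilon.\<close>

type_synonym lc = "real fls"

definition lc_pos :: "lc \<Rightarrow> bool" where
  "lc_pos x \<longleftrightarrow> x \<noteq> 0 \<and> fls_nth x (fls_subdegree x) > 0"

definition lc_less :: "lc \<Rightarrow> lc \<Rightarrow> bool" where
  "lc_less x y \<longleftrightarrow> lc_pos (y - x)"

definition lc_abs :: "lc \<Rightarrow> lc" where
  "lc_abs x = (if lc_pos x \<or> x = 0 then x else - x)"

definition lc_dist :: "lc \<Rightarrow> lc \<Rightarrow> lc" where
  "lc_dist x y = lc_abs (y - x)"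

definition lc_ball :: "lc \<Rightarrow> lc \<Rightarrow> lc set" where
  "lc_ball x r = {z. lc_less (lc_dist x z) r}"

definition lc_Delta :: "nat \<Rightarrow> lc set" where
  "lc_Delta m = {fls_const a * fls_X ^ m | a. m \<ge> 1 \<longrightarrow> a \<noteq> 0}"

definition lc_Delta_down :: "nat \<Rightarrow> lc set" where
  "lc_Delta_down m = (\<Union>n\<in>{m..}. lc_Delta n)"

definition iota_balls :: "lc set set" where
  "iota_balls = {lc_ball x i | x i m. lc_pos i \<and> i \<in> lc_Delta_down m}"

definition tau_iota :: "lc topology" where
  "tau_iota = topology_generated_by iota_balls"

end

theory Submission
  imports Defs
begin

lemma abs_pos: "d \<noteq> 0 \<Longrightarrow> lc_pos (lc_abs d)"
proof -
  assume d: "d \<noteq> 0"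
  show ?thesis
  proof (cases "lc_pos d")
    case True thus ?thesis by (simp add: lc_abs_def)
  next
    case False
    have nz: "fls_nth d (fls_subdegree d) \<noteq> 0" using d by simp
    have "fls_nth d (fls_subdegree d) < 0" using nz False d unfolding lc_pos_def by linarith
    thus ?thesis using False d unfolding lc_abs_def lc_pos_def by simp
  qed
qed

lemma abs_nth: "fls_nth (lc_abs d) j = 0 \<longleftrightarrow> fls_nth d j = 0"
  unfolding lc_abs_def by auto

lemma keyL:
  assumes "lc_pos (fls_X ^ n - lc_abs d)" "j < int n"
  shows "fls_nth d j = 0"
proof (rule ccontr)
  assume nz: "fls_nth d j \<noteq> 0"
  hence d0: "d \<noteq> 0" by auto
  define e where "e = lc_abs d"
  have pe: "lc_pos e" using abs_pos[OF d0] e_def by simp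
  define s where "s = fls_subdegree e"
  have "fls_nth e j \<noteq> 0" using nz abs_nth e_def by simp
  hence sj: "s \<le> j" unfolding s_def by (rule fls_subdegree_leI)
  have c: "fls_nth e s > 0" using pe unfolding lc_pos_def s_def by simp
  define f where "f = fls_X ^ n - e"
  have fs: "fls_nth f s = - fls_nth e s" unfolding f_def using sj assms(2) by simp
  have fk: "fls_nth f k = 0" if "k < s" for k
    unfolding f_def using that sj assms(2) s_def by simp
  have "fls_subdegree f = s"
    by (rule fls_subdegree_eqI) (use fs c fk in auto)
  moreover have "lc_pos f" using assms(1) f_def e_def by simp
  ultimately show False using fs c unfolding lc_pos_def by simp
qed

lemma Xpow_in: "fls_X ^ n \<in> lc_Delta_down n" "lc_pos (fls_X ^ n :: lc)"
  unfolding lc_Delta_down_def lc_Delta_def lc_pos_def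
   apply auto
  by (rule bexI[of _ n]) (auto intro!: exI[of _ 1])

lemma ball_open: "openin tau_iota (lc_ball x (fls_X ^ n))"
  unfolding tau_iota_def openin_topology_generated_by_iff iota_balls_def
  using Xpow_in by (auto intro!: generate_topology_on.Basis)

lemma in_ball: "x \<in> lc_ball x (fls_X ^ n)"
  unfolding lc_ball_def lc_dist_def lc_less_def lc_abs_def using Xpow_in(2) by simp

lemma ball_nth:
  assumes "z \<in> lc_ball x (fls_X ^ n)" "j < int n"
  shows "fls_nth z j = fls_nth x j"
proof -
  have "fls_nth (z - x) j = 0"
    using assms keyL unfolding lc_ball_def lc_dist_def lc_less_def by blast
  thus ?thesis by simp
qed

lemma ball_nth0:
  assumes "z \<in> lc_ball x 1" "j < 0"
  shows "fls_nth z j = fls_nth x j"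
proof -
  have "z \<in> lc_ball x (fls_X ^ 0)" using assms(1) by (metis power_0)
  moreover have "j < int 0" using assms(2) by simp
  ultimately show ?thesis by (rule ball_nth)
qed

lemma open_by_balls:
  assumes "\<And>x. x \<in> U \<Longrightarrow> \<exists>n. lc_ball x (fls_X ^ n) \<subseteq> U"
  shows "openin tau_iota U"
  unfolding openin_subopen[of tau_iota U]
proof
  fix x assume "x \<in> U"
  then obtain n where "lc_ball x (fls_X ^ n) \<subseteq> U" using assms by blast
  moreover have "openin tau_iota (lc_ball x (fls_X ^ n))" by (rule ball_open)
  moreover have "x \<in> lc_ball x (fls_X ^ n)" by (rule in_ball)
  ultimately show "\<exists>T. openin tau_iota T \<and> x \<in> T \<and> T \<subseteq> U" by blast
qed

theorem mainTheorem3: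
  shows "\<not> connected_space tau_iota \<and> Hausdorff_space tau_iota"
proof
  define U where "U = {z::lc. fls_nth z (-1) = 0}"
  have o1: "openin tau_iota U"
    apply (rule open_by_balls, rule exI[of _ 0])
    using ball_nth0[where j="-1"] by (force simp: U_def)
  have o2: "openin tau_iota (- U)"
    apply (rule open_by_balls, rule exI[of _ 0])
    using ball_nth0[where j="-1"] by (force simp: U_def)
  have a: "(0::lc) \<in> U" unfolding U_def by simp
  have b: "(fls_X_inv::lc) \<in> - U" unfolding U_def by simp
  have c: "topspace tau_iota \<subseteq> U \<union> - U" by blast
  have d: "U \<inter> - U = {}" by blast
  have "U \<noteq> {}" "- U \<noteq> {}" using a b by blast+
  hence "\<exists>E1 E2. openin tau_iota E1 \<and> openin tau_iota E2 \<and>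
                  topspace tau_iota \<subseteq> E1 \<union> E2 \<and> E1 \<inter> E2 = {} \<and> E1 \<noteq> {} \<and> E2 \<noteq> {}"
    using o1 o2 c d by blast
  thus "\<not> connected_space tau_iota"
    unfolding connected_space_def by simp
next
  show "Hausdorff_space tau_iota"
    unfolding Hausdorff_space_def
  proof (intro allI impI)
    fix x y :: lc assume "x \<in> topspace tau_iota \<and> y \<in> topspace tau_iota \<and> x \<noteq> y"
    hence "x \<noteq> y" by simp
    then obtain k where k: "fls_nth x k \<noteq> fls_nth y k"
      by (metis fls_eqI)
    define n where "n = nat (k + 1)"
    have kn: "k < int n" unfolding n_def by simp
    have "disjnt (lc_ball x (fls_X ^ n)) (lc_ball y (fls_X ^ n))"
      unfolding disjnt_def
    proof (rule equals0I)
      fix z assume "z \<in> lc_ball x (fls_X ^ n) \<inter> lc_ball y (fls_X ^ n)"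
      hence "fls_nth z k = fls_nth x k" "fls_nth z k = fls_nth y k"
        using ball_nth[OF _ kn] by auto
      thus False using k by simp
    qed
    thus "\<exists>U V. openin tau_iota U \<and> openin tau_iota V \<and> x \<in> U \<and> y \<in> V \<and> disjnt U V"
      using ball_open[of x n] ball_open[of y n] in_ball[of x n] in_ball[of y n] by blast
  qed
qed

end
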